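(* Let $\tilde M=G/K$ be an irreducible Riemannian symmetric space with Cartan decomposition $\mathfrak g=\mathfrak k\oplus\mathfrak p$, and let $\mathfrak a\subset\mathfrak p$ be a maximal abelian subspace with restricted root system $\Delta\subset\mathfrak a$. \begin{enumerate} \item[(a)] If $\beta,\gamma\in\Delta$ are neither proportional nor orthogonal, then $\tilde R(A,X_\beta)X_\gamma\neq0$ for all nonzero $X_\beta\in\mathfrak p_\beta$, $X_\gamma\in\mathfrak p_\gamma$ and all $A\in\mathfrak a$ with $\langle\beta,A\rangle\neq0$. \item[(b)] If $X,Y\in\mathfrak p$ satisfy $\tilde R(X,Z,W,Y)=0$ for all $Z,W\in\mathfrak p$, then $X=0$ or $Y=0$. \end{enumerate}
   Context: $\varepsilon=\pm1$ is the sign of the Einstein constant of $\tilde M$, $B$ is the Killing form of $\mathfrak g$, and $\mathfrak p\cong T_o\tilde M$ carries the inner product $\langle X,Y\rangle=-\varepsilon B(X,Y)$. The curvature is $\tilde R(X,Y)Z=-[[X,Y],Z]$ and $\tilde R(X,Y,Z,W)=\langle\tilde R(X,Y)Z,W\rangle$. For $\beta\in\mathfrak a$, $\mathfrak g_\beta=\{X\in\mathfrak g:[A,[A,X]]=-\varepsilon\langle\beta,A\rangle^2X\ \forall A\in\mathfrak a\}$; a restricted root is a nonzero $\beta\in\mathfrak a$ with $\mathfrak g_\beta\neq0$, and $\mathfrak p_\beta=\mathfrak g_\beta\cap\mathfrak p$ is its root space. *)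

theory Defs
  imports "HOL-Analysis.Analysis"
begin

text \<open>The Lie algebra g is modelled as real^'n with a bracket br.
  The symmetric space G/K is encoded by its orthogonal involutive Lie algebra
  (g, k, p, eps) where g = k + p is the Cartan decomposition.\<close>

definition lie_algebra :: "(real^'n \<Rightarrow> real^'n \<Rightarrow> real^'n) \<Rightarrow> bool" where
  "lie_algebra br \<longleftrightarrow> bilinear br \<and> (\<forall>X Y. br X Y = - br Y X)
     \<and> (\<forall>X Y Z. br X (br Y Z) + br Y (br Z X) + br Z (br X Y) = 0)"

definition killing :: "(real^'n \<Rightarrow> real^'n \<Rightarrow> real^'n) \<Rightarrow> real^'n \<Rightarrow> real^'n \<Rightarrow> real" where
  "killing br X Y = trace (matrix (\<lambda>Z. br X (br Y Z)))"

definition ip :: "(real^'n \<Rightarrow> real^'n \<Rightarrow> real^'n) \<Rightarrow> real \<Rightarrow> real^'n \<Rightarrow> real^'n \<Rightarrow> real" where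
  "ip br eps X Y = - eps * killing br X Y"

text \<open>Irreducible Riemannian symmetric space (of compact type if eps = 1, of
  noncompact type if eps = -1), given by its Cartan decomposition g = k + p:
  g semisimple (Killing form nondegenerate), k, p complementary subspaces with
  [k,k] in k, [k,p] in p, [p,p] in k, effectivity k = span [p,p],
  B negative definite on k, -eps B positive definite on p, and k acting
  irreducibly on p (p nonzero).\<close>
definition irred_symmetric ::
  "(real^'n \<Rightarrow> real^'n \<Rightarrow> real^'n) \<Rightarrow> (real^'n) set \<Rightarrow> (real^'n) set \<Rightarrow> real \<Rightarrow> bool" where
  "irred_symmetric br k p eps \<longleftrightarrow>
     lie_algebra br \<and> (eps = 1 \<or> eps = -1) \<and>
     (\<forall>X. (\<forall>Y. killing br X Y = 0) \<longrightarrow> X = 0) \<and>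
     subspace k \<and> subspace p \<and> k \<inter> p = {0} \<and> k + p = UNIV \<and>
     (\<forall>X\<in>k. \<forall>Y\<in>k. br X Y \<in> k) \<and>
     (\<forall>X\<in>k. \<forall>Y\<in>p. br X Y \<in> p) \<and>
     (\<forall>X\<in>p. \<forall>Y\<in>p. br X Y \<in> k) \<and>
     k = span {br X Y | X Y. X \<in> p \<and> Y \<in> p} \<and>
     (\<forall>X\<in>k. X \<noteq> 0 \<longrightarrow> killing br X X < 0) \<and>
     (\<forall>X\<in>p. X \<noteq> 0 \<longrightarrow> ip br eps X X > 0) \<and>
     p \<noteq> {0} \<and>
     (\<forall>V. subspace V \<and> V \<subseteq> p \<and> (\<forall>X\<in>k. \<forall>Y\<in>V. br X Y \<in> V) \<longrightarrow> V = {0} \<or> V = p)"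

definition max_abelian ::
  "(real^'n \<Rightarrow> real^'n \<Rightarrow> real^'n) \<Rightarrow> (real^'n) set \<Rightarrow> (real^'n) set \<Rightarrow> bool" where
  "max_abelian br p a \<longleftrightarrow> subspace a \<and> a \<subseteq> p \<and> (\<forall>A\<in>a. \<forall>B\<in>a. br A B = 0) \<and>
     (\<forall>b. subspace b \<and> a \<subseteq> b \<and> b \<subseteq> p \<and> (\<forall>A\<in>b. \<forall>B\<in>b. br A B = 0) \<longrightarrow> b = a)"

definition gspace ::
  "(real^'n \<Rightarrow> real^'n \<Rightarrow> real^'n) \<Rightarrow> real \<Rightarrow> (real^'n) set \<Rightarrow> real^'n \<Rightarrow> (real^'n) set" where
  "gspace br eps a \<beta> = {X. \<forall>A\<in>a. br A (br A X) = (- eps * (ip br eps \<beta> A)^2) *\<^sub>R X}"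

definition pspace ::
  "(real^'n \<Rightarrow> real^'n \<Rightarrow> real^'n) \<Rightarrow> real \<Rightarrow> (real^'n) set \<Rightarrow> (real^'n) set \<Rightarrow> real^'n \<Rightarrow> (real^'n) set" where
  "pspace br eps p a \<beta> = gspace br eps a \<beta> \<inter> p"

definition restricted_roots ::
  "(real^'n \<Rightarrow> real^'n \<Rightarrow> real^'n) \<Rightarrow> real \<Rightarrow> (real^'n) set \<Rightarrow> (real^'n) set" where
  "restricted_roots br eps a = {\<beta>. \<beta> \<in> a \<and> \<beta> \<noteq> 0 \<and> gspace br eps a \<beta> \<noteq> {0}}"

definition curv :: "(real^'n \<Rightarrow> real^'n \<Rightarrow> real^'n) \<Rightarrow> real^'n \<Rightarrow> real^'n \<Rightarrow> real^'n \<Rightarrow> real^'n" where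
  "curv br X Y Z = - br (br X Y) Z"

definition curv4 :: "(real^'n \<Rightarrow> real^'n \<Rightarrow> real^'n) \<Rightarrow> real \<Rightarrow> real^'n \<Rightarrow> real^'n \<Rightarrow> real^'n \<Rightarrow> real^'n \<Rightarrow> real" where
  "curv4 br eps X Y Z W = ip br eps (curv br X Y Z) W"

end

theory Submission imports Defs begin

context
  fixes br :: "real^'n \<Rightarrow> real^'n \<Rightarrow> real^'n"
  assumes L: "lie_algebra br"
begin

lemma bil: "bilinear br" using L unfolding lie_algebra_def by (elim conjE) assumption
lemma anti0: "\<forall>X Y. br X Y = - br Y X" using L unfolding lie_algebra_def by (elim conjE) assumption
lemma anti: "br X Y = - br Y X" using anti0 by (elim allE)
lemma jac0: "\<forall>X Y Z. br X (br Y Z) + br Y (br Z X) + br Z (br X Y) = 0" using L unfolding lie_algebra_def by (elim conjE) assumption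
lemma jac: "br X (br Y Z) + br Y (br Z X) + br Z (br X Y) = 0" using jac0 by (elim allE)

lemma br_radd: "br x (y + z) = br x y + br x z" by (rule bilinear_radd[OF bil])
lemma br_ladd: "br (x + y) z = br x z + br y z" by (rule bilinear_ladd[OF bil])
lemma br_rmul: "br x (c *\<^sub>R y) = c *\<^sub>R br x y" by (rule bilinear_rmul[OF bil])
lemma br_lmul: "br (c *\<^sub>R x) y = c *\<^sub>R br x y" by (rule bilinear_lmul[OF bil])
lemma br_rneg: "br x (- y) = - br x y" by (rule bilinear_rneg[OF bil])
lemma br_lneg: "br (- x) y = - br x y" by (rule bilinear_lneg[OF bil])
lemma br_rsub: "br x (y - z) = br x y - br x z" by (rule bilinear_rsub[OF bil])
lemma br_lsub: "br (x - y) z = br x z - br y z" by (rule bilinear_lsub[OF bil])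
lemma br_rzero[simp]: "br x 0 = 0" by (rule bilinear_rzero[OF bil])
lemma br_lzero[simp]: "br 0 x = 0" by (rule bilinear_lzero[OF bil])
lemma br_self[simp]: "br x x = 0"
proof -
  have e: "br x x + br x x = 0" by (subst (2) anti) (rule add.right_inverse)
  have "(2::real) *\<^sub>R br x x = 0" by (simp only: scaleR_2 e)
  then show ?thesis by simp
qed
lemma lin_r: "linear (br x)" using bil by (simp add: bilinear_def)

lemma ad_br: "br (br X Y) v = br X (br Y v) - br Y (br X v)"
proof -
  have "br v (br X Y) = - br X (br Y v) - br Y (br v X)" using jac[of X Y v]
    by (simp add: algebra_simps eq_neg_iff_add_eq_0)
  moreover have "br (br X Y) v = - br v (br X Y)" by (rule anti)
  moreover have "br Y (br v X) = - br Y (br X v)" using anti[of v X] br_rneg by simp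
  ultimately show ?thesis by simp
qed

lemma killing_sum: "killing br X Y = (\<Sum>i\<in>UNIV. br X (br Y (axis i 1)) $ i)"
  by (simp add: killing_def trace_def matrix_def)

lemma killing_ladd: "killing br (X + X') Y = killing br X Y + killing br X' Y"
  by (simp add: killing_sum br_ladd sum.distrib)
lemma killing_lmul: "killing br (c *\<^sub>R X) Y = c * killing br X Y"
  by (simp add: killing_sum br_lmul sum_distrib_left)
lemma killing_radd: "killing br X (Y + Y') = killing br X Y + killing br X Y'"
  by (simp add: killing_sum br_ladd br_radd sum.distrib)
lemma killing_rmul: "killing br X (c *\<^sub>R Y) = c * killing br X Y"
  by (simp add: killing_sum br_lmul br_rmul sum_distrib_left)
lemma killing_lneg: "killing br (- X) Y = - killing br X Y"
  by (simp add: killing_sum br_lneg sum_negf)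
lemma killing_rneg: "killing br X (- Y) = - killing br X Y"
  by (simp add: killing_sum br_lneg br_rneg sum_negf)
lemma killing_lsub: "killing br (X - X') Y = killing br X Y - killing br X' Y"
  by (simp add: killing_sum br_lsub sum_subtractf)
lemma killing_rsub: "killing br X (Y - Y') = killing br X Y - killing br X Y'"
  by (simp add: killing_sum br_lsub br_rsub sum_subtractf)
lemma killing_lzero[simp]: "killing br 0 Y = 0" by (simp add: killing_sum)
lemma killing_rzero[simp]: "killing br X 0 = 0" by (simp add: killing_sum)

definition M :: "real^'n \<Rightarrow> real^'n^'n" where "M X = matrix (br X)"

lemma mat2: "matrix (\<lambda>v. br X (br Y v)) = M X ** M Y"
proof -
  have "matrix (br X \<circ> br Y) = matrix (br X) ** matrix (br Y)"
    by (rule matrix_compose[OF lin_r lin_r])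
  then show ?thesis by (simp add: M_def o_def)
qed

lemma mat3: "matrix (\<lambda>v. br X (br Y (br Z v))) = M X ** M Y ** M Z"
proof -
  have "linear (\<lambda>v. br Y (br Z v))" using linear_compose[OF lin_r[of Z] lin_r[of Y]] by (simp add: o_def)
  then have "matrix (br X \<circ> (\<lambda>v. br Y (br Z v))) = matrix (br X) ** matrix (\<lambda>v. br Y (br Z v))"
    by (intro matrix_compose lin_r)
  then show ?thesis by (simp add: M_def o_def mat2 matrix_mul_assoc)
qed

lemma matrix_diff: "matrix (\<lambda>v. f v - g v) = matrix f - matrix g"
  by (simp add: matrix_def vec_eq_iff)

lemma killing_sym: "killing br X Y = killing br Y X"
  unfolding killing_def mat2 by (rule trace_mul_sym)

lemma killing_inv: "killing br (br X Y) Z = killing br X (br Y Z)"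
proof -
  have a: "killing br (br X Y) Z = trace (M X ** M Y ** M Z) - trace (M Y ** M X ** M Z)"
    unfolding killing_def ad_br matrix_diff mat3 trace_sub ..
  have b: "killing br X (br Y Z) = trace (M X ** M Y ** M Z) - trace (M X ** M Z ** M Y)"
    unfolding killing_def ad_br br_rsub matrix_diff mat3 trace_sub ..
  have "trace (M Y ** M X ** M Z) = trace (M X ** M Z ** M Y)"
    by (simp add: matrix_mul_assoc[symmetric] trace_mul_sym[of "M Y"])
  then show ?thesis using a b by simp
qed

context
  fixes k p :: "(real^'n) set" and eps :: real
  assumes S: "irred_symmetric br k p eps"
begin

lemma eps: "eps = 1 \<or> eps = -1" using S unfolding irred_symmetric_def by (elim conjE) assumption
lemma eps0: "eps \<noteq> 0" using eps by auto
lemma semi0: "\<forall>X. (\<forall>Y. killing br X Y = 0) \<longrightarrow> X = 0" using S unfolding irred_symmetric_def by (elim conjE) assumption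
lemma semi: "(\<And>Y. killing br X Y = 0) \<Longrightarrow> X = 0" using semi0 by blast
lemma subk: "subspace k" using S unfolding irred_symmetric_def by (elim conjE) assumption
lemma subp: "subspace p" using S unfolding irred_symmetric_def by (elim conjE) assumption
lemma kp0: "x \<in> k \<Longrightarrow> x \<in> p \<Longrightarrow> x = 0"
proof -
  assume "x \<in> k" "x \<in> p"
  moreover have "k \<inter> p = {0}" using S unfolding irred_symmetric_def by (elim conjE) assumption
  ultimately show "x = 0" by blast
qed
lemma split: obtains a b where "u = a + b" "a \<in> k" "b \<in> p"
proof -
  have "k + p = UNIV" using S unfolding irred_symmetric_def by (elim conjE) assumption
  then have "u \<in> k + p" by simp
  then show ?thesis using that by (auto elim: set_plus_elim)
qed
lemma kk_c: "\<forall>X\<in>k. \<forall>Y\<in>k. br X Y \<in> k" using S unfolding irred_symmetric_def by (elim conjE) assumption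
lemma kk: "X \<in> k \<Longrightarrow> Y \<in> k \<Longrightarrow> br X Y \<in> k" using kk_c by blast
lemma kp_c: "\<forall>X\<in>k. \<forall>Y\<in>p. br X Y \<in> p" using S unfolding irred_symmetric_def by (elim conjE) assumption
lemma kp: "X \<in> k \<Longrightarrow> Y \<in> p \<Longrightarrow> br X Y \<in> p" using kp_c by blast
lemma pk: "X \<in> p \<Longrightarrow> Y \<in> k \<Longrightarrow> br X Y \<in> p"
proof -
  assume "X \<in> p" "Y \<in> k"
  then have "- br Y X \<in> p" using kp real_vector.subspace_neg[OF subp] by blast
  then show ?thesis using anti[of X Y] by simp
qed
lemma pp_c: "\<forall>X\<in>p. \<forall>Y\<in>p. br X Y \<in> k" using S unfolding irred_symmetric_def by (elim conjE) assumption
lemma pp: "X \<in> p \<Longrightarrow> Y \<in> p \<Longrightarrow> br X Y \<in> k" using pp_c by blast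
lemma zero_k: "V \<in> k \<Longrightarrow> killing br V V = 0 \<Longrightarrow> V = 0"
proof -
  have "\<forall>X\<in>k. X \<noteq> 0 \<longrightarrow> killing br X X < 0" using S unfolding irred_symmetric_def by (elim conjE) assumption
  then show "V \<in> k \<Longrightarrow> killing br V V = 0 \<Longrightarrow> V = 0" by force
qed
lemma zero_p: "V \<in> p \<Longrightarrow> killing br V V = 0 \<Longrightarrow> V = 0"
proof -
  have "\<forall>X\<in>p. X \<noteq> 0 \<longrightarrow> 0 < ip br eps X X" using S unfolding irred_symmetric_def by (elim conjE) assumption
  then show "V \<in> p \<Longrightarrow> killing br V V = 0 \<Longrightarrow> V = 0" by (force simp: ip_def)
qed
lemma irr: "subspace V \<Longrightarrow> V \<subseteq> p \<Longrightarrow> (\<And>X Y. X \<in> k \<Longrightarrow> Y \<in> V \<Longrightarrow> br X Y \<in> V) \<Longrightarrow> V = {0} \<or> V = p"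
proof -
  have "\<forall>V. subspace V \<and> V \<subseteq> p \<and> (\<forall>X\<in>k. \<forall>Y\<in>V. br X Y \<in> V) \<longrightarrow> V = {0} \<or> V = p"
    using S unfolding irred_symmetric_def by (elim conjE) assumption
  then show "subspace V \<Longrightarrow> V \<subseteq> p \<Longrightarrow> (\<And>X Y. X \<in> k \<Longrightarrow> Y \<in> V \<Longrightarrow> br X Y \<in> V) \<Longrightarrow> V = {0} \<or> V = p"
    by blast
qed

lemma kill_sq: "killing br (br Y w) V = - killing br w (br Y V)"
proof -
  have "killing br (br Y w) V = killing br (- br w Y) V" using anti[of Y w] by simp
  also have "\<dots> = - killing br w (br Y V)" by (simp add: killing_lneg killing_inv)
  finally show ?thesis .
qed

lemma step2:
  assumes X: "X \<in> p" and Y: "Y \<in> p" and H: "\<forall>Z\<in>p. \<forall>W\<in>p. killing br (br X Z) (br W Y) = 0"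
    and W: "W \<in> p"
  shows "br X (br W Y) = 0"
proof -
  define V where "V = br X (br W Y)"
  have Vp: "V \<in> p" unfolding V_def by (intro pk pp X W Y)
  have "killing br (br X V) (br W Y) = 0" using H Vp W by blast
  moreover have "killing br (br X V) (br W Y) = - killing br V V"
    by (simp add: kill_sq V_def)
  ultimately show ?thesis using zero_p[OF Vp] V_def by simp
qed

lemma step2':
  assumes X: "X \<in> p" and Y: "Y \<in> p" and H: "\<forall>Z\<in>p. \<forall>W\<in>p. killing br (br X Z) (br W Y) = 0"
    and W: "W \<in> p"
  shows "br Y (br W X) = 0"
proof -
  have "\<forall>Z\<in>p. \<forall>W\<in>p. killing br (br Y Z) (br W X) = 0"
  proof (intro ballI)
    fix Z W assume "Z \<in> p" "W \<in> p"
    have "killing br (br Y Z) (br W X) = killing br (br W X) (br Y Z)" by (rule killing_sym)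
    also have "\<dots> = killing br (- br X W) (- br Z Y)" using anti[of W X] anti[of Y Z] by simp
    also have "\<dots> = killing br (br X W) (br Z Y)" by (simp add: killing_lneg killing_rneg)
    finally show "killing br (br Y Z) (br W X) = 0" using H \<open>Z \<in> p\<close> \<open>W \<in> p\<close> by simp
  qed
  then show ?thesis using step2[OF Y X _ W] by blast
qed

lemma decomp:
  assumes Y: "Y \<in> p"
  shows "\<exists>u1 w. u = u1 + br Y w \<and> br Y u1 = 0"
proof -
  define R where "R = range (br Y)"
  have subR: "subspace R" unfolding R_def
    by (intro real_vector.linear_subspace_image lin_r real_vector.subspace_UNIV)
  have pos: "v = 0" if "v \<in> R" "br Y v = 0" for v
  proof -
    obtain w where vw: "v = br Y w" using \<open>v \<in> R\<close> R_def by auto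
    obtain a b where ab: "w = a + b" "a \<in> k" "b \<in> p" by (rule split)
    have ap: "br Y a \<in> p" by (rule pk[OF Y ab(2)])
    have bk: "br Y b \<in> k" by (rule pp[OF Y ab(3)])
    have c1: "br Y (br Y a) \<in> k" by (rule pp[OF Y ap])
    have c2: "br Y (br Y b) \<in> p" by (rule pk[OF Y bk])
    have sum0: "br Y (br Y a) + br Y (br Y b) = 0" using that vw ab by (simp add: br_radd)
    then have "br Y (br Y a) = - br Y (br Y b)" by (simp add: eq_neg_iff_add_eq_0)
    then have "br Y (br Y a) \<in> p" using c2 real_vector.subspace_neg[OF subp] by simp
    then have e1: "br Y (br Y a) = 0" using kp0 c1 by blast
    then have e2: "br Y (br Y b) = 0" using sum0 by simp
    have "br Y a = 0" using zero_p[OF ap] kill_sq[of Y a "br Y a"] e1 by simp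
    moreover have "br Y b = 0" using zero_k[OF bk] kill_sq[of Y b "br Y b"] e2 by simp
    ultimately show ?thesis using vw ab by (simp add: br_radd)
  qed
  have inj: "inj_on (br Y) R"
    using pos by (simp add: real_vector.linear_inj_on_iff_eq_0[OF lin_r subR])
  have "dim (br Y ` R) = dim R"
    using eucl.dim_image_eq[of "br Y" R] lin_r[of Y] inj real_vector.span_eq_iff[of R, THEN iffD2, OF subR] by simp
  moreover have "br Y ` R \<subseteq> R" unfolding R_def by auto
  moreover have "subspace (br Y ` R)" by (intro real_vector.linear_subspace_image lin_r subR)
  ultimately have eq: "br Y ` R = R" using eucl.subspace_dim_equal[OF _ subR] by simp
  have "br Y u \<in> R" unfolding R_def by simp
  then obtain r where r: "r \<in> R" "br Y r = br Y u" using eq by (metis imageE)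
  then obtain w where "r = br Y w" unfolding R_def by auto
  moreover have "br Y (u - r) = 0" using r by (simp add: br_rsub)
  ultimately show ?thesis by (intro exI[of _ "u - r"] exI[of _ w]) simp
qed

lemma partB:
  assumes X: "X \<in> p" and Y: "Y \<in> p" and H0: "\<forall>Z\<in>p. \<forall>W\<in>p. curv4 br eps X Z W Y = 0"
  shows "X = 0 \<or> Y = 0"
proof -
  have H: "\<forall>Z\<in>p. \<forall>W\<in>p. killing br (br X Z) (br W Y) = 0"
  proof (intro ballI)
    fix Z W assume "Z \<in> p" "W \<in> p"
    have "curv4 br eps X Z W Y = eps * killing br (br X Z) (br W Y)"
      by (simp add: curv4_def ip_def curv_def killing_lneg killing_inv)
    then show "killing br (br X Z) (br W Y) = 0" using H0 \<open>Z \<in> p\<close> \<open>W \<in> p\<close> eps0 by simp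
  qed
  note s2 = step2[OF X Y H] and s2' = step2'[OF X Y H]
  have s3: "br X Y = 0"
  proof -
    have c: "br W (br X Y) = 0" if "W \<in> p" for W
    proof -
      have "br W (br X Y) = br (br W X) Y + br X (br W Y)"
        using ad_br[of W X Y] ad_br[of W X] by (simp add: algebra_simps)
      also have "\<dots> = - br Y (br W X) + br X (br W Y)" using anti[of "br W X" Y] by simp
      finally show ?thesis using s2[OF that] s2'[OF that] by simp
    qed
    have "br X Y \<in> k" by (rule pp[OF X Y])
    moreover have "killing br (br X Y) (br X Y) = 0"
      using killing_inv[of X Y "br X Y"] c[OF Y] by simp
    ultimately show ?thesis using zero_k by blast
  qed
  have s4: "br X (br T Y) = 0" if T: "T \<in> k" for T
  proof -
    have "br T (br X Y) = br (br T X) Y + br X (br T Y)"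
      using ad_br[of T X Y] by (simp add: algebra_simps)
    then have e: "br (br T X) Y = - br X (br T Y)" using s3 by (simp add: eq_neg_iff_add_eq_0)
    have "br X (br (br T X) Y) = 0" by (rule s2[OF kp[OF T X]])
    then have e2: "br X (br X (br T Y)) = 0" using e by (simp add: br_rneg)
    have Vk: "br X (br T Y) \<in> k" by (intro pp X kp T Y)
    have "killing br (br X (br T Y)) (br X (br T Y)) = 0"
      using kill_sq[of X "br T Y" "br X (br T Y)"] e2 by simp
    then show ?thesis using zero_k[OF Vk] by simp
  qed
  have s5: "br X (br Y u) = 0" for u
  proof -
    obtain a b where ab: "u = a + b" "a \<in> k" "b \<in> p" by (rule split)
    have "br X (br Y a) = 0" using s4[OF ab(2)] anti[of Y a] by (simp add: br_rneg)
    moreover have "br X (br Y b) = 0" using s2[OF ab(3)] anti[of Y b] by (simp add: br_rneg)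
    ultimately show ?thesis using ab by (simp add: br_radd)
  qed
  define A where "A = \<Inter>{L. subspace L \<and> Y \<in> L \<and> range (br Y) \<subseteq> L \<and> (\<forall>a\<in>L. \<forall>b\<in>L. br a b \<in> L)}"
  have Amin: "A \<subseteq> L" if "subspace L" "Y \<in> L" "range (br Y) \<subseteq> L" "\<forall>a\<in>L. \<forall>b\<in>L. br a b \<in> L" for L
    unfolding A_def using that by blast
  have Asub: "subspace A" unfolding A_def by (rule real_vector.subspace_Inter) blast
  have AY: "Y \<in> A" unfolding A_def by blast
  have Ar: "br Y u \<in> A" for u unfolding A_def by blast
  have Acl: "br a b \<in> A" if "a \<in> A" "b \<in> A" for a b using that unfolding A_def by blast
  have AX: "br X w = 0" if "w \<in> A" for w
  proof -
    have "A \<subseteq> {w. br X w = 0}"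
    proof (rule Amin)
      show "subspace {w. br X w = 0}" by (rule real_vector.linear_subspace_kernel[OF lin_r])
      show "Y \<in> {w. br X w = 0}" using s3 by simp
      show "range (br Y) \<subseteq> {w. br X w = 0}" using s5 by auto
      show "\<forall>a\<in>{w. br X w = 0}. \<forall>b\<in>{w. br X w = 0}. br a b \<in> {w. br X w = 0}"
      proof (intro ballI)
        fix a b assume a: "a \<in> {w. br X w = 0}" and b: "b \<in> {w. br X w = 0}"
        have "br (br X a) b = br X (br a b) - br a (br X b)" by (rule ad_br)
        then show "br a b \<in> {w. br X w = 0}" using a b by simp
      qed
    qed
    then show ?thesis using that by blast
  qed
  have Aid: "br a u \<in> A" if "a \<in> A" for a u
  proof -
    have "A \<subseteq> {a\<in>A. \<forall>u. br a u \<in> A}"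
    proof (rule Amin)
      show "subspace {a\<in>A. \<forall>u. br a u \<in> A}"
        unfolding subspace_def using Asub
        by (auto simp: br_ladd br_lmul real_vector.subspace_0 real_vector.subspace_add real_vector.subspace_scale)
      show "Y \<in> {a\<in>A. \<forall>u. br a u \<in> A}" using AY Ar by blast
      show "range (br Y) \<subseteq> {a\<in>A. \<forall>u. br a u \<in> A}"
      proof
        fix z assume "z \<in> range (br Y)"
        then obtain v where z: "z = br Y v" by auto
        have "\<forall>u. br z u \<in> A"
        proof
          fix u
          obtain u1 w where uw: "u = u1 + br Y w" "br Y u1 = 0" using decomp[OF Y] by blast
          have "br (br Y v) u1 = br Y (br v u1)" using ad_br[of Y v u1] uw(2) by simp
          then have "br (br Y v) u1 \<in> A" using Ar by simp
          moreover have "br (br Y v) (br Y w) \<in> A" using Acl Ar by blast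
          ultimately show "br z u \<in> A" using uw(1) Asub z
            by (simp add: br_radd real_vector.subspace_add)
        qed
        then show "z \<in> {a\<in>A. \<forall>u. br a u \<in> A}" using z Ar by simp
      qed
      show "\<forall>a\<in>{a\<in>A. \<forall>u. br a u \<in> A}. \<forall>b\<in>{a\<in>A. \<forall>u. br a u \<in> A}. br a b \<in> {a\<in>A. \<forall>u. br a u \<in> A}"
      proof (intro ballI)
        fix a b assume a0: "a \<in> {a\<in>A. \<forall>u. br a u \<in> A}" and b0: "b \<in> {a\<in>A. \<forall>u. br a u \<in> A}"
        then have a: "a \<in> A" "\<forall>u. br a u \<in> A" and b: "b \<in> A" "\<forall>u. br b u \<in> A" by auto
        have "br a b \<in> A" using Acl a b by blast
        moreover have "br (br a b) u \<in> A" for u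
        proof -
          have "br a (br b u) \<in> A" "br b (br a u) \<in> A" using Acl a b by blast+
          then show ?thesis using ad_br[of a b u] Asub
            by (simp add: real_vector.subspace_diff)
        qed
        ultimately show "br a b \<in> {a\<in>A. \<forall>u. br a u \<in> A}" by simp
      qed
    qed
    then show ?thesis using that by blast
  qed
  define V where "V = {v\<in>p. \<forall>w\<in>A. br v w = 0}"
  have "V = {0} \<or> V = p"
  proof (rule irr)
    show "subspace V" unfolding subspace_def V_def using subp
      by (auto simp: br_ladd br_lmul real_vector.subspace_0 real_vector.subspace_add real_vector.subspace_scale)
    show "V \<subseteq> p" unfolding V_def by blast
    fix T v assume T: "T \<in> k" and v: "v \<in> V"
    show "br T v \<in> V" unfolding V_def
    proof (intro CollectI conjI ballI)
      show "br T v \<in> p" using T v kp V_def by blast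
      fix w assume w: "w \<in> A"
      have "br T w \<in> A" using Aid[OF w, of T] anti[of T w] Asub real_vector.subspace_neg by metis
      then have "br v (br T w) = 0" using v V_def by blast
      moreover have "br v w = 0" using v w V_def by blast
      ultimately show "br (br T v) w = 0" using ad_br[of T v w] by simp
    qed
  qed
  moreover have XV: "X \<in> V" using X AX V_def by blast
  ultimately have "X = 0 \<or> V = p" by blast
  moreover have "Y = 0" if Vp: "V = p"
  proof -
    have pY: "br v Y = 0" if "v \<in> p" for v using Vp that AY V_def by blast
    have adY: "br Y u = 0" for u
    proof -
      obtain a b where ab: "u = a + b" "a \<in> k" "b \<in> p" by (rule split)
      have "br Y b = 0" using pY[OF ab(3)] anti[of Y b] by simp
      moreover have "br Y a = 0"
      proof -
        have q: "br Y a \<in> p" by (rule pk[OF Y ab(2)])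
        have "br Y (br Y a) = 0" using pY[OF q] anti[of Y "br Y a"] by simp
        then show ?thesis using zero_p[OF q] kill_sq[of Y a "br Y a"] by simp
      qed
      ultimately show ?thesis using ab by (simp add: br_radd)
    qed
    show ?thesis by (rule semi) (simp add: killing_sum adY)
  qed
  ultimately show ?thesis by blast
qed


context
  fixes a :: "(real^'n) set"
  assumes MA: "max_abelian br p a"
begin

lemma suba: "subspace a" using MA unfolding max_abelian_def by blast
lemma ap: "A \<in> a \<Longrightarrow> A \<in> p" using MA unfolding max_abelian_def by blast
lemma comm: "A \<in> a \<Longrightarrow> B \<in> a \<Longrightarrow> br A B = 0" using MA unfolding max_abelian_def by blast
lemma maxim: "subspace b \<Longrightarrow> a \<subseteq> b \<Longrightarrow> b \<subseteq> p \<Longrightarrow> (\<And>A B. A \<in> b \<Longrightarrow> B \<in> b \<Longrightarrow> br A B = 0) \<Longrightarrow> b = a"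
  using MA unfolding max_abelian_def by blast

lemma ip_sym: "ip br eps X Y = ip br eps Y X" by (simp add: ip_def killing_sym)

lemma root: "X \<in> pspace br eps p a d \<Longrightarrow> A \<in> a \<Longrightarrow> br A (br A X) = (- eps * (ip br eps d A)^2) *\<^sub>R X"
  by (simp add: pspace_def gspace_def)
lemma rootp: "X \<in> pspace br eps p a d \<Longrightarrow> X \<in> p"
  by (simp add: pspace_def)

lemma L0:
  assumes A: "A \<in> a" and X: "X \<in> pspace br eps p a d" and z: "ip br eps d A = 0"
  shows "br A X = 0"
proof -
  have e: "br A (br A X) = 0" using root[OF X A] z by simp
  have Vk: "br A X \<in> k" by (intro pp ap A rootp[OF X])
  have "killing br (br A X) (br A X) = 0" using kill_sq[of A X "br A X"] e by simp
  then show ?thesis using zero_k[OF Vk] by simp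
qed

lemma L1:
  assumes A: "A \<in> a" and A': "A' \<in> a" and X: "X \<in> pspace br eps p a d"
  shows "(ip br eps d A) *\<^sub>R br A' X = (ip br eps d A') *\<^sub>R br A X"
proof -
  define A'' where "A'' = (ip br eps d A) *\<^sub>R A' - (ip br eps d A') *\<^sub>R A"
  have "A'' \<in> a" unfolding A''_def using suba A A'
    by (intro real_vector.subspace_diff real_vector.subspace_scale) auto
  moreover have "ip br eps d A'' = 0"
    by (simp add: A''_def ip_def killing_rsub killing_rmul algebra_simps)
  ultimately have "br A'' X = 0" using L0 X by blast
  then show ?thesis by (simp add: A''_def br_lsub br_lmul)
qed

lemma L2:
  assumes A: "A \<in> a" and A': "A' \<in> a" and X: "X \<in> pspace br eps p a d" and b: "ip br eps d A \<noteq> 0"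
  shows "br A' (br A X) = (- eps * ip br eps d A * ip br eps d A') *\<^sub>R X"
proof -
  let ?b = "ip br eps d A"
  have c: "br A' (br A X) = br A (br A' X)" using ad_br[of A' A X] comm[OF A' A] by simp
  have "?b *\<^sub>R br A (br A' X) = br A (?b *\<^sub>R br A' X)" by (simp add: br_rmul)
  also have "\<dots> = br A ((ip br eps d A') *\<^sub>R br A X)" using L1[OF A A' X] by simp
  also have "\<dots> = (ip br eps d A') *\<^sub>R ((- eps * ?b^2) *\<^sub>R X)" by (simp add: br_rmul root[OF X A])
  also have "\<dots> = ?b *\<^sub>R ((- eps * ?b * ip br eps d A') *\<^sub>R X)" by (simp add: power2_eq_square algebra_simps)
  finally have fin: "?b *\<^sub>R br A (br A' X) = ?b *\<^sub>R ((- eps * ?b * ip br eps d A') *\<^sub>R X)" .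
  then have "br A (br A' X) = (- eps * ?b * ip br eps d A') *\<^sub>R X \<or> ?b = 0" by (simp only: scaleR_cancel_left)
  then have "br A (br A' X) = (- eps * ?b * ip br eps d A') *\<^sub>R X" using b by blast
  then show ?thesis using c by simp
qed

lemma partA:
  assumes bR: "\<beta> \<in> restricted_roots br eps a" and gR: "\<gamma> \<in> restricted_roots br eps a"
    and np: "\<nexists>c. \<gamma> = c *\<^sub>R \<beta>" and bg: "ip br eps \<beta> \<gamma> \<noteq> 0"
    and Xb: "Xb \<in> pspace br eps p a \<beta>" and Xg: "Xg \<in> pspace br eps p a \<gamma>" and A: "A \<in> a"
    and Xb0: "Xb \<noteq> 0" and Xg0: "Xg \<noteq> 0" and bA: "ip br eps \<beta> A \<noteq> 0"
  shows "curv br A Xb Xg \<noteq> 0"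
proof
  assume "curv br A Xb Xg = 0"
  then have TX: "br (br A Xb) Xg = 0" by (simp add: curv_def)
  define T where "T = br A Xb"
  define b where "b = ip br eps \<beta> A"
  have ba: "\<beta> \<in> a" "\<beta> \<noteq> 0" and ga: "\<gamma> \<in> a" "\<gamma> \<noteq> 0" using bR gR by (auto simp: restricted_roots_def)
  have Xbp: "Xb \<in> p" and Xgp: "Xg \<in> p" using rootp Xb Xg by auto
  have Tk: "T \<in> k" unfolding T_def by (intro pp ap A Xbp)
  have T0: "T \<noteq> 0"
  proof
    assume "T = 0"
    then have "(- eps * b * b) *\<^sub>R Xb = 0" using L2[OF A A Xb bA] by (simp add: T_def b_def)
    then show False using eps0 bA Xb0 b_def by simp
  qed
  define A' where "A' = (ip br eps \<gamma> \<gamma>) *\<^sub>R \<beta> - (ip br eps \<beta> \<gamma>) *\<^sub>R \<gamma>"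
  have A'a: "A' \<in> a" unfolding A'_def using suba ba ga
    by (intro real_vector.subspace_diff real_vector.subspace_scale) auto
  have gA': "ip br eps \<gamma> A' = 0"
    unfolding A'_def using killing_sym[of \<gamma> \<beta>] by (simp add: ip_def killing_rsub killing_rmul algebra_simps)
  have gg: "ip br eps \<gamma> \<gamma> \<noteq> 0"
  proof
    assume "ip br eps \<gamma> \<gamma> = 0"
    then have "killing br \<gamma> \<gamma> = 0" using eps0 by (simp add: ip_def)
    then show False using zero_p[OF ap[OF ga(1)]] ga(2) by simp
  qed
  have bA': "ip br eps \<beta> A' \<noteq> 0"
  proof
    assume z: "ip br eps \<beta> A' = 0"
    have "ip br eps A' A' = ip br eps \<gamma> \<gamma> * ip br eps \<beta> A' - ip br eps \<beta> \<gamma> * ip br eps \<gamma> A'"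
      unfolding A'_def by (simp add: ip_def killing_lsub killing_lmul algebra_simps)
    then have "killing br A' A' = 0" using z gA' eps0 by (simp add: ip_def)
    then have "A' = 0" using zero_p[OF ap[OF A'a]] by simp
    then have "(ip br eps \<gamma> \<gamma>) *\<^sub>R \<beta> = (ip br eps \<beta> \<gamma>) *\<^sub>R \<gamma>" by (simp add: A'_def)
    then have "\<gamma> = (1 / ip br eps \<beta> \<gamma>) *\<^sub>R ((ip br eps \<gamma> \<gamma>) *\<^sub>R \<beta>)" using bg by simp
    then have "\<gamma> = (1 / ip br eps \<beta> \<gamma> * ip br eps \<gamma> \<gamma>) *\<^sub>R \<beta>" by simp
    then show False using np by blast
  qed
  have gz: "br A' Xg = 0" by (rule L0[OF A'a Xg gA'])
  have "br (br A' T) Xg = br A' (br T Xg) - br T (br A' Xg)" by (rule ad_br)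
  then have "br (br A' T) Xg = 0" using TX gz by (simp add: T_def)
  then have "(- eps * b * ip br eps \<beta> A') *\<^sub>R br Xb Xg = 0"
    using L2[OF A A'a Xb bA] by (simp add: T_def b_def br_lmul br_lneg)
  then have XX: "br Xb Xg = 0" using eps0 bA bA' b_def by simp
  define H where "H = br Xb T"
  have Hp: "H \<in> p" unfolding H_def by (rule pk[OF Xbp Tk])
  have cH: "br A'' H = 0" if A'': "A'' \<in> a" for A''
  proof -
    have e: "br (br A'' Xb) T = br A'' (br Xb T) - br Xb (br A'' T)" by (rule ad_br)
    have "b *\<^sub>R br A'' Xb = (ip br eps \<beta> A'') *\<^sub>R T" using L1[OF A A'' Xb] by (simp add: b_def T_def)
    moreover have "br A'' Xb = (1 / b) *\<^sub>R (b *\<^sub>R br A'' Xb)" using bA b_def by simp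
    ultimately have "br A'' Xb = (1 / b * ip br eps \<beta> A'') *\<^sub>R T" by simp
    then have "br (br A'' Xb) T = 0" by (simp add: br_lmul)
    moreover have "br Xb (br A'' T) = 0" using L2[OF A A'' Xb bA] by (simp add: T_def br_rmul br_rneg)
    ultimately show ?thesis using e H_def by simp
  qed
  have Ha: "H \<in> a"
  proof -
    let ?B = "span (insert H a)"
    have "?B = a"
    proof (rule maxim)
      show "subspace ?B" by (rule real_vector.subspace_span)
      show "a \<subseteq> ?B" by (meson real_vector.span_superset subset_insertI subset_trans)
      show "?B \<subseteq> p"
      proof -
        have "insert H a \<subseteq> p" using Hp ap by blast
        then have "?B \<subseteq> span p" by (rule real_vector.span_mono)
        then show ?thesis using real_vector.span_eq_iff[of p, THEN iffD2, OF subp] by simp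
      qed
      fix x y assume x: "x \<in> ?B" and y: "y \<in> ?B"
      obtain c where c: "x - c *\<^sub>R H \<in> a" using x real_vector.span_insert[of H a] real_vector.span_eq_iff[of a, THEN iffD2, OF suba] by auto
      obtain d where d: "y - d *\<^sub>R H \<in> a" using y real_vector.span_insert[of H a] real_vector.span_eq_iff[of a, THEN iffD2, OF suba] by auto
      define x0 where "x0 = x - c *\<^sub>R H"
      define y0 where "y0 = y - d *\<^sub>R H"
      have xe: "x = x0 + c *\<^sub>R H" and ye: "y = y0 + d *\<^sub>R H" by (simp_all add: x0_def y0_def)
      have "br x0 y0 = 0" using comm c d x0_def y0_def by simp
      moreover have "br x0 H = 0" using cH c x0_def by simp
      moreover have "br H y0 = 0" using cH[of y0] d y0_def anti[of H y0] by simp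
      ultimately show "br x y = 0" by (simp add: xe ye br_ladd br_radd br_lmul br_rmul)
    qed
    moreover have "H \<in> ?B" by (simp add: real_vector.span_base)
    ultimately show ?thesis by simp
  qed
  have HX: "br H Xg = 0"
    using ad_br[of Xb T Xg] TX XX by (simp add: H_def T_def)
  have "(- eps * (ip br eps \<gamma> H)^2) *\<^sub>R Xg = 0" using root[OF Xg Ha] HX by simp
  then have gH: "ip br eps \<gamma> H = 0" using eps0 Xg0 by simp
  have "killing br \<gamma> H = killing br (br \<gamma> Xb) T" by (simp add: H_def killing_inv)
  moreover have "b *\<^sub>R br \<gamma> Xb = (ip br eps \<beta> \<gamma>) *\<^sub>R T" using L1[OF A ga(1) Xb] by (simp add: b_def T_def)
  ultimately have "b * killing br \<gamma> H = ip br eps \<beta> \<gamma> * killing br T T"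
    using killing_lmul[of b "br \<gamma> Xb" T] killing_lmul[of "ip br eps \<beta> \<gamma>" T T] by simp
  moreover have "killing br T T \<noteq> 0" using zero_k[OF Tk] T0 by blast
  ultimately have "killing br \<gamma> H \<noteq> 0" using bg by auto
  then show False using gH eps0 by (simp add: ip_def)
qed

end

end

end

theorem lemma2p1:
  fixes br :: "real^'n \<Rightarrow> real^'n \<Rightarrow> real^'n"
    and k p a :: "(real^'n) set" and eps :: real
  assumes "irred_symmetric br k p eps"
    and "max_abelian br p a"
  shows "(\<forall>\<beta>\<in>restricted_roots br eps a. \<forall>\<gamma>\<in>restricted_roots br eps a.
            (\<nexists>c. \<gamma> = c *\<^sub>R \<beta>) \<and> ip br eps \<beta> \<gamma> \<noteq> 0 \<longrightarrow>
            (\<forall>X\<^sub>\<beta>\<in>pspace br eps p a \<beta>. \<forall>X\<^sub>\<gamma>\<in>pspace br eps p a \<gamma>. \<forall>A\<in>a.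
               X\<^sub>\<beta> \<noteq> 0 \<and> X\<^sub>\<gamma> \<noteq> 0 \<and> ip br eps \<beta> A \<noteq> 0 \<longrightarrow> curv br A X\<^sub>\<beta> X\<^sub>\<gamma> \<noteq> 0))
       \<and> (\<forall>X\<in>p. \<forall>Y\<in>p. (\<forall>Z\<in>p. \<forall>W\<in>p. curv4 br eps X Z W Y = 0) \<longrightarrow> X = 0 \<or> Y = 0)"
proof -
  have L: "lie_algebra br" using assms(1) unfolding irred_symmetric_def by (elim conjE) assumption
  show ?thesis
  proof (intro conjI ballI impI)
    fix \<beta> \<gamma> Xb Xg A
    assume "\<beta> \<in> restricted_roots br eps a" "\<gamma> \<in> restricted_roots br eps a"
      "(\<nexists>c. \<gamma> = c *\<^sub>R \<beta>) \<and> ip br eps \<beta> \<gamma> \<noteq> 0"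
      "Xb \<in> pspace br eps p a \<beta>" "Xg \<in> pspace br eps p a \<gamma>" "A \<in> a"
      "Xb \<noteq> 0 \<and> Xg \<noteq> 0 \<and> ip br eps \<beta> A \<noteq> 0"
    then show "curv br A Xb Xg \<noteq> 0"
      using partA[OF L assms(1) assms(2)] by blast
  next
    fix X Y assume "X \<in> p" "Y \<in> p" "\<forall>Z\<in>p. \<forall>W\<in>p. curv4 br eps X Z W Y = 0"
    then show "X = 0 \<or> Y = 0" using partB[OF L assms(1)] by blast
  qed
qed

end
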